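(* Let $q=2^h$ with $h\not\equiv 2\pmod 4$, let $A,B,C,D\in\mathbb F_{q^4}$ with $B^{q^2+1}\neq 1$, and let $$\Lambda=\{(u,v)\in\mathbb F_{q^4}^2 : v^{q^2}+Au+Bv+u^q=0,\ v^{q^2}+u^{q^2}+v^q+Cu+Dv=0\}.$$ Then $\#\Lambda\le q^3$. *)

theory Defs
  imports Main
begin

end

theory Submission
  imports Defs "HOL-Computational_Algebra.Polynomial"
begin


lemma char_card: "of_nat (card (UNIV::'a::{finite,field} set)) = (0::'a)"
proof -
  have A: "(\<Sum>x\<in>(UNIV::'a set). x) = (\<Sum>x\<in>UNIV. x + 1)"
    by (rule sum.reindex_bij_witness[of _ "\<lambda>x. x + 1" "\<lambda>x. x - 1"]) simp_all
  have B: "(\<Sum>x\<in>(UNIV::'a set). x + 1) = (\<Sum>x\<in>(UNIV::'a set). x) + (\<Sum>x\<in>(UNIV::'a set). 1)" by (rule sum.distrib)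
  have "(\<Sum>x\<in>(UNIV::'a set). (1::'a)) = 0" using A B by (metis add_cancel_left_right)
  thus ?thesis by simp
qed

lemma fermat: "(x::'a::{finite,field})^(card (UNIV::'a set)) = x"
proof (cases "x = 0")
  case True
  have "card (UNIV::'a set) > 0" by (simp add: card_gt_0_iff)
  thus ?thesis using True by simp
next
  case False
  define S where "S = UNIV - {0::'a}"
  have "(\<Prod>y\<in>S. y) = (\<Prod>y\<in>S. x * y)"
    unfolding S_def by (rule prod.reindex_bij_witness[of _ "\<lambda>y. x * y" "\<lambda>y. y / x"]) (use False in simp_all)
  also have "\<dots> = (\<Prod>y\<in>S. x) * (\<Prod>y\<in>S. y)" by (rule prod.distrib)
  also have "(\<Prod>y\<in>S. x) = x ^ card S" by (rule prod_constant)
  finally have eq: "(\<Prod>y\<in>S. y) = x ^ card S * (\<Prod>y\<in>S. y)" .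
  have "finite S" unfolding S_def by simp
  hence "(\<Prod>y\<in>S. y) \<noteq> 0" by (subst prod_zero_iff) (auto simp: S_def)
  with eq have "x ^ card S = 1" by (metis mult_cancel_right1)
  moreover have "card (UNIV::'a set) = Suc (card S)"
    unfolding S_def by (rule card.remove) auto
  ultimately show ?thesis by (metis power_Suc2 mult_1)
qed

lemma frob2: assumes "(2::'a::comm_ring_1) = 0" shows "((x::'a)+y)^(2^k) = x^(2^k) + y^(2^k)"
proof (induction k)
  case 0 then show ?case by simp
next
  case (Suc k)
  have "(x+y)^(2^Suc k) = ((x+y)^(2^k))^2" by (simp add: power_mult[symmetric] mult.commute)
  also have "\<dots> = (x^(2^k) + y^(2^k))^2" using Suc by simp
  also have "\<dots> = (x^(2^k))^2 + (y^(2^k))^2 + 2 * x^(2^k) * y^(2^k)" by (simp add: power2_eq_square algebra_simps)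
  also have "\<dots> = x^(2^Suc k) + y^(2^Suc k)" using assms by (simp add: power_mult[symmetric] mult.commute)
  finally show ?case .
qed



lemma c2a: assumes "(2::'a::comm_ring_1) = 0" shows "(x::'a) + x = 0" "x + (x + y) = y"
  using assms by (metis add.assoc add.left_neutral mult_2 mult_zero_left)+

lemma c2eq: assumes "(2::'a::comm_ring_1) = 0" shows "((x::'a) = y) = (x + y = 0)"
  using assms by (metis add.assoc add.right_neutral c2a(1))

lemma c2I: assumes "(2::'a::comm_ring_1) = 0" and "(x::'a) + y = 0" shows "x = y"
  using assms c2eq by blast

lemma c2sq: assumes "(2::'a::field) = 0" and "(x::'a)*x = y*y" shows "x = y"
proof -
  have "(x+y)*(x+y) = 0" using assms by (simp add: algebra_simps c2a[OF assms(1)])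
  hence "x + y = 0" by simp
  thus ?thesis using c2eq[OF assms(1)] by blast
qed

lemma core:
 fixes a0 a1 a2 a3 x0 x1 x2 x3 :: "'a::field"
 assumes c: "(2::'a) = 0"
 and E0: "a1*a2 = 1 + x2*(1+x0)" and E1: "a2*a3 = 1 + x3*(1+x1)"
 and E2: "a3*a0 = 1 + x0*(1+x2)" and E3: "a0*a1 = 1 + x1*(1+x3)"
 and F0: "x2*a0 + x1*a2 = 1 + x0*x2" and F1: "x3*a1 + x2*a3 = 1 + x1*x3"
 and F2: "x0*a2 + x3*a0 = 1 + x0*x2" and F3: "x1*a3 + x0*a1 = 1 + x1*x3"
 and b0: "1 + x0*x2 \<noteq> 0" and b1: "1 + x1*x3 \<noteq> 0"
 shows "x2 = x0 \<and> x3 = x1 \<and> x1 = x0 + 1 \<and> (x0*x0+x0)*(x0*x0+x0) + (x0*x0+x0) + 1 = 0"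
proof -
  note cc = c2a[OF c]
  define D0 where "D0 = 1 + x0*x2"
  define D1 where "D1 = 1 + x1*x3"
  have Da0: "D1*a0 = x1*(1 + x0*(1+x2)) + x0*(1 + x1*(1+x3))"
  proof -
    have "D1*a0 = (x1*a3 + x0*a1)*a0" using F3 by (simp add: D1_def)
    also have "\<dots> = x1*(a3*a0) + x0*(a0*a1)" by (simp add: algebra_simps)
    finally show ?thesis using E2 E3 by simp
  qed
  have Da1: "D0*a1 = x2*(1 + x1*(1+x3)) + x1*(1 + x2*(1+x0))"
  proof -
    have "D0*a1 = (x2*a0 + x1*a2)*a1" using F0 by (simp add: D0_def)
    also have "\<dots> = x2*(a0*a1) + x1*(a1*a2)" by (simp add: algebra_simps)
    finally show ?thesis using E0 E3 by simp
  qed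
  have Da2: "D1*a2 = x3*(1 + x2*(1+x0)) + x2*(1 + x3*(1+x1))"
  proof -
    have "D1*a2 = (x3*a1 + x2*a3)*a2" using F1 by (simp add: D1_def)
    also have "\<dots> = x3*(a1*a2) + x2*(a2*a3)" by (simp add: algebra_simps)
    finally show ?thesis using E0 E1 by simp
  qed
  have Da3: "D0*a3 = x0*(1 + x3*(1+x1)) + x3*(1 + x0*(1+x2))"
  proof -
    have "D0*a3 = (x0*a2 + x3*a0)*a3" using F2 by (simp add: D0_def)
    also have "\<dots> = x0*(a2*a3) + x3*(a3*a0)" by (simp add: algebra_simps)
    finally show ?thesis using E1 E2 by simp
  qed
  define P where "P = x0*x2 + x1*x3"
  have G0: "x1*x2*(P + x0*x3) = 1" (is "?lhs = _")
  proof -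
    have "x2*(D1*a0) + x1*(D1*a2) = D1*(x2*a0 + x1*a2)" by (simp add: algebra_simps)
    also have "\<dots> = D0*D1" using F0 by (simp add: D0_def mult.commute)
    finally have "x2*(D1*a0) + x1*(D1*a2) = D0*D1" .
    hence "x2*(x1*(1 + x0*(1+x2)) + x0*(1 + x1*(1+x3))) + x1*(x3*(1 + x2*(1+x0)) + x2*(1 + x3*(1+x1))) = (1 + x0*x2)*(1+x1*x3)" (is "?A = ?B")
      unfolding Da0 Da2 unfolding D0_def D1_def .
    moreover have "?lhs + 1 = ?A + ?B" unfolding P_def by (simp add: algebra_simps cc)
    ultimately show ?thesis using c2eq[OF c] by metis
  qed
  have G1: "x2*x3*(P + x1*x0) = 1" (is "?lhs = _")
  proof -
    have "x3*(D0*a1) + x2*(D0*a3) = D0*(x3*a1 + x2*a3)" by (simp add: algebra_simps)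
    also have "\<dots> = D0*D1" using F1 by (simp add: D1_def mult.commute)
    finally have "x3*(D0*a1) + x2*(D0*a3) = D0*D1" .
    hence "x3*(x2*(1 + x1*(1+x3)) + x1*(1 + x2*(1+x0))) + x2*(x0*(1 + x3*(1+x1)) + x3*(1 + x0*(1+x2))) = (1 + x0*x2)*(1+x1*x3)" (is "?A = ?B")
      unfolding Da1 Da3 unfolding D0_def D1_def .
    moreover have "?lhs + 1 = ?A + ?B" unfolding P_def by (simp add: algebra_simps cc)
    ultimately show ?thesis using c2eq[OF c] by metis
  qed
  have G2: "x3*x0*(P + x2*x1) = 1" (is "?lhs = _")
  proof -
    have "x0*(D1*a2) + x3*(D1*a0) = D1*(x0*a2 + x3*a0)" by (simp add: algebra_simps)
    also have "\<dots> = D0*D1" using F2 by (simp add: D0_def mult.commute)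
    finally have "x0*(D1*a2) + x3*(D1*a0) = D0*D1" .
    hence "x0*(x3*(1 + x2*(1+x0)) + x2*(1 + x3*(1+x1))) + x3*(x1*(1 + x0*(1+x2)) + x0*(1 + x1*(1+x3))) = (1 + x0*x2)*(1+x1*x3)" (is "?A = ?B")
      unfolding Da0 Da2 unfolding D0_def D1_def .
    moreover have "?lhs + 1 = ?A + ?B" unfolding P_def by (simp add: algebra_simps cc)
    ultimately show ?thesis using c2eq[OF c] by metis
  qed
  have G3: "x0*x1*(P + x3*x2) = 1" (is "?lhs = _")
  proof -
    have "x1*(D0*a3) + x0*(D0*a1) = D0*(x1*a3 + x0*a1)" by (simp add: algebra_simps)
    also have "\<dots> = D0*D1" using F3 by (simp add: D1_def mult.commute)
    finally have "x1*(D0*a3) + x0*(D0*a1) = D0*D1" .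
    hence "x1*(x0*(1 + x3*(1+x1)) + x3*(1 + x0*(1+x2))) + x0*(x2*(1 + x1*(1+x3)) + x1*(1 + x2*(1+x0))) = (1 + x0*x2)*(1+x1*x3)" (is "?A = ?B")
      unfolding Da1 Da3 unfolding D0_def D1_def .
    moreover have "?lhs + 1 = ?A + ?B" unfolding P_def by (simp add: algebra_simps cc)
    ultimately show ?thesis using c2eq[OF c] by metis
  qed
  have Pnz: "P \<noteq> 0"
  proof
    assume P0: "P = 0"
    hence "x1*x3 = x0*x2" unfolding P_def using c2eq[OF c] by (metis add.commute)
    hence "(x0*x2)*(x0*x2) = (x0*x2)*(x1*x3)" by simp
    also have "\<dots> = x1*x2*(P + x0*x3)" using P0 by (simp add: algebra_simps)
    finally have "(x0*x2)*(x0*x2) = 1" using G0 by simp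
    hence "x0*x2 = 1" using c2sq[OF c, of "x0*x2" 1] by simp
    thus False using b0 cc by simp
  qed
  have "P*(x1*x2 + x3*x0) = 0"
  proof -
    have "x1*x2*(P + x0*x3) + x3*x0*(P + x2*x1) = 0" using G0 G2 c by simp
    thus ?thesis by (simp add: algebra_simps cc)
  qed
  hence y1: "x1*x2 = x3*x0" using Pnz c2eq[OF c] by simp
  have "P*(x2*x3 + x0*x1) = 0"
  proof -
    have "x2*x3*(P + x1*x0) + x0*x1*(P + x3*x2) = 0" using G1 G3 c by simp
    thus ?thesis by (simp add: algebra_simps cc)
  qed
  hence y0: "x2*x3 = x0*x1" using Pnz c2eq[OF c] by simp
  have nz: "x0 \<noteq> 0" "x1 \<noteq> 0" "x2 \<noteq> 0" "x3 \<noteq> 0" using G0 G2 by auto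
  have "x0*x2*(x1*x1) = x0*x2*(x3*x3)" using y0 y1 
    by (metis mult.assoc mult.commute)
  hence "x1*x1 = x3*x3" using nz by simp
  hence x31: "x3 = x1" using c2sq[OF c] by metis
  hence x20: "x2 = x0" using y0 nz by simp
  have "D1*a0 = D1*a2" using Da0 Da2 unfolding x31 x20 by simp
  moreover have "D1 \<noteq> 0" using b1 D1_def by simp
  ultimately have a02: "a0 = a2" by simp
  have "1+x1*(1+x1) = 1+x0*(1+x0)" using E0 E3 a02 x31 x20 by (simp add: mult.commute)
  moreover have "(x0+x1)*(1+x0+x1) = (1+x1*(1+x1)) + (1+x0*(1+x0))" by (simp add: algebra_simps cc)
  ultimately have "(x0+x1)*(1+x0+x1) = 0" using c2eq[OF c] by metis
  hence "x0 + x1 = 0 \<or> 1 + x0 + x1 = 0" by simp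
  hence "x0 + x1 = 0 \<or> x1 + (x0 + 1) = 0" by (metis add.commute add.assoc)
  hence "x1 = x0 \<or> x1 = x0 + 1" using c2eq[OF c, of x1 x0] c2eq[OF c, of x1 "x0+1"] by (auto simp: add.commute)
  moreover have "x1 \<noteq> x0"
  proof
    assume "x1 = x0"
    hence "(x0*x0)*(x0*x0) = 1" using G0 x31 x20 unfolding P_def by (simp add: algebra_simps cc)
    hence "x0*x0 = 1" using c2sq[OF c, of "x0*x0" 1] by simp
    thus False using b0 x20 cc by simp
  qed
  ultimately have x1e: "x1 = x0 + 1" by blast
  have "(x0*x0+x0)*(x0*x0+x0) + (x0*x0+x0) + 1 = 0"
    using G0 unfolding P_def x31 x20 x1e by (simp add: algebra_simps cc)
  thus ?thesis using x31 x20 x1e by simp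
qed



lemma finish:
  fixes B :: "'a::field"
  assumes c: "(2::'a) = 0" and hq: "B^(2^h) = B + 1"
    and nn: "(B*B+B)*(B*B+B) + (B*B+B) + 1 = 0" and hm: "h mod 4 \<noteq> 2"
  shows False
proof -
  note cc = c2a[OF c]
  define n where "n = B*B + B"
  have "B + n = B*B + (B + B)" unfolding n_def by (simp only: add.commute add.left_commute add.assoc)
  hence Bsq: "B*B = B + n" using cc(1)[of B] by simp
  have nsq: "n*n = n + 1"
  proof -
    have "n*n + n + 1 = 0" using nn unfolding n_def .
    thus ?thesis using c2eq[OF c, of "n*n" "n+1"] by (simp add: add.assoc)
  qed
  have B4: "B^4 = B + 1"
  proof -
    have "B^4 = (B*B)*(B*B)" by (simp add: power4_eq_xxxx mult.assoc)
    also have "\<dots> = (B+n)*(B+n)" using Bsq by simp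
    also have "\<dots> = B*B + n*n" by (rule c2I[OF c]) (simp add: algebra_simps cc)
    also have "\<dots> = B + 1" unfolding Bsq nsq by (rule c2I[OF c]) (simp add: algebra_simps cc)
    finally show ?thesis .
  qed
  have f4: "(x+y)^4 = x^4 + y^4" for x y :: 'a
    using frob2[OF c, of x y 2] by simp
  have pow4: "B^(4^j) = (if even j then B else B + 1)" for j
  proof (induction j)
    case 0 then show ?case by simp
  next
    case (Suc j)
    have "B^(4^Suc j) = (B^(4^j))^4" by (simp add: power_mult[symmetric] mult.commute)
    also have "\<dots> = (if even j then B^4 else (B+1)^4)" using Suc by simp
    also have "\<dots> = (if even (Suc j) then B else B + 1)"
      using B4 f4[of B 1] by (simp add: cc add.assoc)
    finally show ?case .
  qed
  show False
  proof (cases "even h")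
    case True
    then obtain j where hj: "h = 2*j" by blast
    have "B^(2^h) = B^(4^j)" unfolding hj by (simp add: power_mult)
    hence e: "B + 1 = (if even j then B else B + 1)" using hq pow4 by simp
    show False
    proof (cases "even j")
      case True
      thus False using e by simp
    next
      case False
      thus False using hm hj by presburger
    qed
  next
    case False
    then obtain j where hj: "h = 2*j+1" using oddE by blast
    have "(2::nat)^h = 4^j*2" unfolding hj by (simp add: power_add power_mult)
    hence "B^(2^h) = (B^(4^j))^2" by (simp only: power_mult)
    hence e: "B + 1 = (if even j then B else B + 1)^2" using hq pow4 by simp
    show False
    proof (cases "even j")
      case True
      hence "B*B = B + 1" using e by (simp add: power2_eq_square)
      hence "n = (B + 1) + B" unfolding n_def by simp
      also have "\<dots> = 1" by (rule c2I[OF c]) (simp add: algebra_simps cc)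
      finally have "n = 1" .
      thus False using nsq c by simp
    next
      case False
      hence "B + 1 = (B+1)*(B+1)" using e by (simp add: power2_eq_square)
      also have "\<dots> = B*B + 1" by (rule c2I[OF c]) (simp add: algebra_simps cc)
      finally have "B*B = B" by simp
      hence "n = B + B" unfolding n_def by simp
      hence "n = 0" using cc(1)[of B] by simp
      thus False using nsq by simp
    qed
  qed
qed



theorem proposition4p2:
  fixes A B C D :: "'a::{finite,field}" and h q :: nat
  assumes "q = 2 ^ h"
    and "card (UNIV :: 'a set) = q ^ 4"
    and "h mod 4 \<noteq> 2"
    and "B ^ (q ^ 2 + 1) \<noteq> 1"
  shows "card {(u :: 'a, v :: 'a).
            v ^ (q ^ 2) + A * u + B * v + u ^ q = 0 \<and>
            v ^ (q ^ 2) + u ^ (q ^ 2) + v ^ q + C * u + D * v = 0} \<le> q ^ 3"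
proof -
  note hq = assms(1) and hcard = assms(2) and hm = assms(3) and hB = assms(4)
  have c: "(2::'a) = 0"
  proof -
    have "(of_nat (card (UNIV::'a set)) :: 'a) = 0" by (rule char_card)
    hence "(2::'a)^h^4 = 0" unfolding hcard hq by simp
    thus ?thesis by simp
  qed
  note cc = c2a[OF c]
  have q2: "q \<ge> 2"
  proof (rule ccontr)
    assume "\<not> q \<ge> 2"
    hence "q = 1" using hq by (cases h) auto
    hence "card (UNIV::'a set) = 1" using hcard by simp
    moreover have "card {0::'a, 1} \<le> card (UNIV::'a set)" by (rule card_mono) auto
    ultimately show False by simp
  qed
  define f where "f = (\<lambda>x::'a. x^q)"
  have fadd: "f (x + y) = f x + f y" for x y unfolding f_def hq by (rule frob2[OF c])
  have fmul: "f (x * y) = f x * f y" for x y unfolding f_def by (simp add: power_mult_distrib)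
  have f1: "f 1 = 1" unfolding f_def by simp
  have f0: "f 0 = 0" unfolding f_def using q2 by simp
  have f4: "f (f (f (f x))) = x" for x
  proof -
    have "f (f (f (f x))) = x^(q*q*q*q)" unfolding f_def by (simp add: power_mult)
    also have "q*q*q*q = card (UNIV::'a set)" using hcard by (simp add: power4_eq_xxxx)
    finally show ?thesis using fermat by simp
  qed
  have fsq: "x^(q^2) = f (f x)" for x unfolding f_def by (simp add: power_mult power2_eq_square)
  have fcube: "x^(q^3) = f (f (f x))" for x
    unfolding f_def by (simp add: power_mult[symmetric] power3_eq_cube mult.assoc)
  have fnz: "f x = 0 \<Longrightarrow> x = 0" for x unfolding f_def by simp
  define a0 where "a0 = A"
  define a1 where "a1 = f a0"
  define a2 where "a2 = f a1"
  define a3 where "a3 = f a2"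
  have fa: "f a0 = a1" "f a1 = a2" "f a2 = a3" "f a3 = a0"
    using a1_def a2_def a3_def f4 a0_def by auto
  define b0 where "b0 = B"
  define b1 where "b1 = f b0"
  define b2 where "b2 = f b1"
  define b3 where "b3 = f b2"
  have fb: "f b0 = b1" "f b1 = b2" "f b2 = b3" "f b3 = b0"
    using b1_def b2_def b3_def f4 b0_def by auto
  define \<beta> where "\<beta> = 1 + b0*b2"
  define \<beta>1 where "\<beta>1 = 1 + b1*b3"
  have b_nz: "\<beta> \<noteq> 0"
  proof
    assume "\<beta> = 0"
    hence "b0*b2 = 1" unfolding \<beta>_def using c2eq[OF c, of 1 "b0*b2"] by simp
    moreover have "B ^ (q^2 + 1) = b2 * b0" unfolding b2_def b1_def b0_def
      by (simp add: power_add fsq)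
    ultimately show False using hB by (simp add: mult.commute)
  qed
  have fbeta: "f \<beta> = \<beta>1" unfolding \<beta>_def \<beta>1_def by (simp add: fadd fmul f1 fb)
  have b1_nz: "\<beta>1 \<noteq> 0" using fbeta fnz b_nz by metis
  define c3 where "c3 = \<beta>1*b0 + \<beta>*a3 + D*\<beta>1"
  define c2 where "c2 = \<beta>1*b0*a2 + \<beta>*\<beta>1 + \<beta>*b3 + D*\<beta>1*a2"
  define c1 where "c1 = \<beta>1 + \<beta>*b3*a1 + D*\<beta>1*b2"
  define c0 where "c0 = \<beta>1*a0 + \<beta> + \<beta>*\<beta>1*C + D*\<beta>1*b2*a0"
  define V where "V = (\<lambda>u. (f (f (f u)) + a2*f (f u) + b2*f u + b2*a0*u) / \<beta>)"
  define p where "p = monom c3 (q^3) + monom c2 (q^2) + monom c1 q + monom c0 1"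
  let ?L = "{(u :: 'a, v :: 'a).
            v ^ (q ^ 2) + A * u + B * v + u ^ q = 0 \<and>
            v ^ (q ^ 2) + u ^ (q ^ 2) + v ^ q + C * u + D * v = 0}"
  have sub: "?L \<subseteq> (\<lambda>u. (u, V u)) ` {u. poly p u = 0}"
  proof
    fix z assume "z \<in> ?L"
    then obtain u v where z: "z = (u, v)" and e1: "v ^ (q ^ 2) + A * u + B * v + u ^ q = 0"
      and e2: "v ^ (q ^ 2) + u ^ (q ^ 2) + v ^ q + C * u + D * v = 0" by blast
    define u1 where "u1 = f u"
    define u2 where "u2 = f u1"
    define u3 where "u3 = f u2"
    have fu: "f u = u1" "f u1 = u2" "f u2 = u3" "f u3 = u" using u1_def u2_def u3_def f4 by auto
    define v1 where "v1 = f v"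
    define v2 where "v2 = f v1"
    define v3 where "v3 = f v2"
    have fv: "f v = v1" "f v1 = v2" "f v2 = v3" "f v3 = v" using v1_def v2_def v3_def f4 by auto
    have uq: "u^q = u1" "v^q = v1" unfolding u1_def v1_def f_def by simp_all
    have k0: "v2 + a0*u + b0*v + u1 = 0" using e1 unfolding fsq a0_def b0_def uq
      by (simp add: fu fv)
    have k0': "v2 + u2 + v1 + C*u + D*v = 0" using e2 unfolding fsq uq
      by (simp add: fu fv)
    have k1: "v3 + a1*u1 + b1*v1 + u2 = 0" using arg_cong[OF k0, of f] by (simp add: fadd fmul fa fb fu fv f0)
    have k2: "v + a2*u2 + b2*v2 + u3 = 0" using arg_cong[OF k1, of f] by (simp add: fadd fmul fa fb fu fv f0)
    have k3: "v1 + a3*u3 + b3*v3 + u = 0" using arg_cong[OF k2, of f] by (simp add: fadd fmul fa fb fu fv f0)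
    define X0 where "X0 = \<beta>*v + (u3 + a2*u2 + b2*u1 + b2*a0*u)"
    define X2 where "X2 = \<beta>*v2 + (a0*u + u1 + b0*a2*u2 + b0*u3)"
    define X1 where "X1 = \<beta>1*v1 + (a3*u3 + u + b3*a1*u1 + b3*u2)"
    have "X0 = (v + a2*u2 + b2*v2 + u3) + b2*(v2 + a0*u + b0*v + u1)"
      unfolding X0_def \<beta>_def by (rule c2I[OF c]) (simp add: algebra_simps cc)
    hence X0: "X0 = 0" using k0 k2 by simp
    have "X2 = (v2 + a0*u + b0*v + u1) + b0*(v + a2*u2 + b2*v2 + u3)"
      unfolding X2_def \<beta>_def by (rule c2I[OF c]) (simp add: algebra_simps cc)
    hence X2: "X2 = 0" using k0 k2 by simp
    have "X1 = (v1 + a3*u3 + b3*v3 + u) + b3*(v3 + a1*u1 + b1*v1 + u2)"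
      unfolding X1_def \<beta>1_def by (rule c2I[OF c]) (simp add: algebra_simps cc)
    hence X1: "X1 = 0" using k1 k3 by simp
    have "c3*u3 + c2*u2 + c1*u1 + c0*u = \<beta>1*X2 + \<beta>*X1 + D*\<beta>1*X0 + \<beta>*\<beta>1*(v2 + u2 + v1 + C*u + D*v)"
      unfolding c3_def c2_def c1_def c0_def X0_def X1_def X2_def \<beta>_def \<beta>1_def
      by (rule c2I[OF c]) (simp add: algebra_simps cc)
    hence P0: "c3*u3 + c2*u2 + c1*u1 + c0*u = 0" using X0 X1 X2 k0' by simp
    have "poly p u = c3*u3 + c2*u2 + c1*u1 + c0*u"
      unfolding p_def by (simp add: poly_monom fcube fsq uq fu)
    hence pu: "poly p u = 0" using P0 by simp
    have "\<beta>*v = u3 + a2*u2 + b2*u1 + b2*a0*u" using X0 unfolding X0_def by (rule c2I[OF c])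
    hence "v = V u" unfolding V_def using b_nz by (simp add: fu field_simps)
    thus "z \<in> (\<lambda>u. (u, V u)) ` {u. poly p u = 0}" using z pu by blast
  qed
  have qne: "q^3 \<noteq> q^2" "q^3 \<noteq> q" "q^3 \<noteq> 1" "q^2 \<noteq> q" "q^2 \<noteq> 1" "q \<noteq> 1"
    "q^2 \<noteq> q^3" "q \<noteq> q^3" "1 \<noteq> q^3" "q \<noteq> q^2" "1 \<noteq> q^2" "1 \<noteq> q"
  proof -
    have l1: "q < q^2" using q2 by (simp add: power2_eq_square)
    have l2: "q^2 < q^3" using q2 by (simp add: power2_eq_square power3_eq_cube)
    show "q^3 \<noteq> q^2" "q^3 \<noteq> q" "q^3 \<noteq> 1" "q^2 \<noteq> q" "q^2 \<noteq> 1" "q \<noteq> 1"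
      "q^2 \<noteq> q^3" "q \<noteq> q^3" "1 \<noteq> q^3" "q \<noteq> q^2" "1 \<noteq> q^2" "1 \<noteq> q"
      using q2 l1 l2 by linarith+
  qed
  have pnz: "p \<noteq> 0"
  proof
    assume p0: "p = 0"
    have "coeff p (q^3) = c3" "coeff p (q^2) = c2" "coeff p q = c1"
      unfolding p_def using qne by (simp_all add: coeff_monom)
    hence z3: "c3 = 0" and z2: "c2 = 0" and z1: "c1 = 0" using p0 by auto
    have "c2 = \<beta>*(\<beta>1 + b3 + a2*a3) + a2*c3"
      unfolding c2_def c3_def by (rule c2I[OF c]) (simp add: algebra_simps cc)
    hence "\<beta>*(\<beta>1 + b3 + a2*a3) = 0" using z2 z3 by simp
    hence "\<beta>1 + b3 + a2*a3 = 0" using b_nz by simp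
    hence "a2*a3 = \<beta>1 + b3" using c2eq[OF c, of "a2*a3" "\<beta>1 + b3"] by (simp add: add.commute)
    also have "\<dots> = 1 + b3*(1+b1)" unfolding \<beta>1_def by (simp add: algebra_simps)
    finally have E1: "a2*a3 = 1 + b3*(1+b1)" .
    have "c1 = \<beta>*(\<beta>1 + b3*a1 + b2*a3) + b2*c3"
      unfolding c1_def c3_def \<beta>_def by (rule c2I[OF c]) (simp add: algebra_simps cc)
    hence "\<beta>*(\<beta>1 + b3*a1 + b2*a3) = 0" using z1 z3 by simp
    hence "\<beta>1 + (b3*a1 + b2*a3) = 0" using b_nz by (simp add: add.assoc)
    hence F1: "b3*a1 + b2*a3 = 1 + b1*b3" using c2eq[OF c, of "b3*a1 + b2*a3" "\<beta>1"]
      unfolding \<beta>1_def by (simp add: add.commute)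
    have E2: "a3*a0 = 1 + b0*(1+b2)" using arg_cong[OF E1, of f] by (simp add: fadd fmul fa fb f1)
    have E3: "a0*a1 = 1 + b1*(1+b3)" using arg_cong[OF E2, of f] by (simp add: fadd fmul fa fb f1)
    have E0: "a1*a2 = 1 + b2*(1+b0)" using arg_cong[OF E3, of f] by (simp add: fadd fmul fa fb f1)
    have F2': "b0*a2 + b3*a0 = 1 + b2*b0" using arg_cong[OF F1, of f] by (simp add: fadd fmul fa fb f1)
    have F3': "b1*a3 + b0*a1 = 1 + b3*b1" using arg_cong[OF F2', of f] by (simp add: fadd fmul fa fb f1)
    have F0: "b2*a0 + b1*a2 = 1 + b0*b2" using arg_cong[OF F3', of f] by (simp add: fadd fmul fa fb f1)
    have F2: "b0*a2 + b3*a0 = 1 + b0*b2" using F2' by (simp add: mult.commute)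
    have F3: "b1*a3 + b0*a1 = 1 + b1*b3" using F3' by (simp add: mult.commute)
    have "b2 = b0 \<and> b3 = b1 \<and> b1 = b0 + 1 \<and> (b0*b0+b0)*(b0*b0+b0) + (b0*b0+b0) + 1 = 0"
      by (rule core[OF c E0 E1 E2 E3 F0 F1 F2 F3]) (use b_nz b1_nz in \<open>simp_all add: \<beta>_def \<beta>1_def\<close>)
    hence r1: "B^(2^h) = B + 1" and r2: "(B*B+B)*(B*B+B) + (B*B+B) + 1 = 0"
      unfolding b1_def b0_def f_def hq by auto
    show False by (rule finish[OF c r1 r2 hm])
  qed
  have degp: "degree p \<le> q^3"
  proof -
    have "degree (monom c3 (q^3)) \<le> q^3" "degree (monom c2 (q^2)) \<le> q^3"
      "degree (monom c1 q) \<le> q^3" "degree (monom c0 1) \<le> q^3"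
      using q2 qne by (auto intro: order.trans[OF degree_monom_le] simp: power2_eq_square power3_eq_cube)
    thus ?thesis unfolding p_def by (intro degree_add_le) auto
  qed
  have "card ?L \<le> card ((\<lambda>u. (u, V u)) ` {u. poly p u = 0})" by (rule card_mono[OF _ sub]) simp
  also have "\<dots> \<le> card {u. poly p u = 0}" by (rule card_image_le) simp
  also have "\<dots> \<le> degree p" by (rule card_poly_roots_bound[OF pnz])
  also have "\<dots> \<le> q^3" by (rule degp)
  finally show ?thesis .
qed

end
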